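(* Let $T$ be the tree with two vertices $v,w$ of degree $3$ and four leaves (edges $e_1,e_2$ join $v$ to leaves, $e_3=vw$, edges $e_4,e_5$ join $w$ to leaves), with bias $b$ on each of $e_1,e_2,e_4,e_5$ and bias $1-4b$ on $e_3$, where $b$ is the unique zero of $105b^3-90b^2+24b-2$ in $0<b<1/4$. Then \[E_T=\frac{4(1-3b)(5b^2-5b+1)}{(7b-2)^2},\] which lies in $(0.8797,0.8798)$. Hence $c^*=0.8798$ is $5$-admissible.
   Context: A biased tree $T$ on $k$ edges is a tree with edges $e_1,\dots,e_k$ in which every non-leaf vertex has degree $3$, together with nonnegative numbers (biases) $b_1,\dots,b_k$ with $b_1+\cdots+b_k=1$. Let $\mathcal P$ be the set of subgraphs of $T$ that are maximal (under inclusion) among subgraphs that are unions of vertex-disjoint paths, each path beginning and ending at leaf vertices of $T$. Define $f_T(x_1,\dots,x_k)=\max_{P\in\mathcal P}\sum_{i:e_i\in E(P)}b_ix_i$ and \[E_T=\int_0^\infty\!\!\cdots\int_0^\infty f_T(x_1,\dots,x_k)e^{-x_1-\cdots-x_k}\,dx_1\cdots dx_k.\] A positive constant $c^*$ is $k$-admissible if $E_T<c^*$ for some biased tree $T$ on $k$ edges. *)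

theory Defs
  imports "HOL-Analysis.Analysis"
begin

text \<open>A graph is given by a vertex set V :: nat set and k edges, the edge with
index i (for i < k) being the two-element vertex set E i.  Edges e_1..e_k of
the paper correspond to indices 0..k-1.\<close>

definition tdeg :: "nat \<Rightarrow> (nat \<Rightarrow> nat set) \<Rightarrow> nat \<Rightarrow> nat" where
  "tdeg k E v = card {i. i < k \<and> v \<in> E i}"

definition tpath :: "nat \<Rightarrow> (nat \<Rightarrow> nat set) \<Rightarrow> nat list \<Rightarrow> bool" where
  "tpath k E ps \<longleftrightarrow> ps \<noteq> [] \<and> distinct ps \<and>
     (\<forall>j. Suc j < length ps \<longrightarrow> (\<exists>i<k. E i = {ps ! j, ps ! Suc j}))"

definition path_edges :: "nat \<Rightarrow> (nat \<Rightarrow> nat set) \<Rightarrow> nat list \<Rightarrow> nat set" where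
  "path_edges k E ps = {i. i < k \<and> (\<exists>j. Suc j < length ps \<and> E i = {ps ! j, ps ! Suc j})}"

definition is_tree :: "nat set \<Rightarrow> nat \<Rightarrow> (nat \<Rightarrow> nat set) \<Rightarrow> bool" where
  "is_tree V k E \<longleftrightarrow> finite V \<and> card V = k + 1 \<and>
     (\<forall>i<k. E i \<subseteq> V \<and> card (E i) = 2) \<and> inj_on E {..<k} \<and>
     (\<forall>u\<in>V. \<forall>v\<in>V. \<exists>ps. tpath k E ps \<and> hd ps = u \<and> last ps = v)"

definition is_leaf :: "nat set \<Rightarrow> nat \<Rightarrow> (nat \<Rightarrow> nat set) \<Rightarrow> nat \<Rightarrow> bool" where
  "is_leaf V k E v \<longleftrightarrow> v \<in> V \<and> tdeg k E v = 1"

definition is_biased_tree :: "nat set \<Rightarrow> nat \<Rightarrow> (nat \<Rightarrow> nat set) \<Rightarrow> (nat \<Rightarrow> real) \<Rightarrow> bool" where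
  "is_biased_tree V k E b \<longleftrightarrow> is_tree V k E \<and>
     (\<forall>v\<in>V. \<not> is_leaf V k E v \<longrightarrow> tdeg k E v = 3) \<and>
     (\<forall>i<k. 0 \<le> b i) \<and> (\<Sum>i<k. b i) = 1"

definition leaf_path :: "nat set \<Rightarrow> nat \<Rightarrow> (nat \<Rightarrow> nat set) \<Rightarrow> nat list \<Rightarrow> bool" where
  "leaf_path V k E ps \<longleftrightarrow> tpath k E ps \<and> 2 \<le> length ps \<and>
     is_leaf V k E (hd ps) \<and> is_leaf V k E (last ps)"

text \<open>Subgraphs that are unions of vertex-disjoint leaf-to-leaf paths, represented by
their edge sets (the vertex set of such a subgraph is the set of vertices incident
with its edges, so inclusion of subgraphs is inclusion of edge sets).\<close>
definition leaf_path_unions :: "nat set \<Rightarrow> nat \<Rightarrow> (nat \<Rightarrow> nat set) \<Rightarrow> nat set set" where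
  "leaf_path_unions V k E = {S. \<exists>Ps. (\<forall>p\<in>Ps. leaf_path V k E p) \<and>
      (\<forall>p\<in>Ps. \<forall>q\<in>Ps. p \<noteq> q \<longrightarrow> set p \<inter> set q = {}) \<and>
      S = (\<Union>p\<in>Ps. path_edges k E p)}"

definition maximal_unions :: "nat set \<Rightarrow> nat \<Rightarrow> (nat \<Rightarrow> nat set) \<Rightarrow> nat set set" where
  "maximal_unions V k E = {S \<in> leaf_path_unions V k E.
      \<not> (\<exists>S'\<in>leaf_path_unions V k E. S \<subset> S')}"

definition fT :: "nat set \<Rightarrow> nat \<Rightarrow> (nat \<Rightarrow> nat set) \<Rightarrow> (nat \<Rightarrow> real) \<Rightarrow> (nat \<Rightarrow> real) \<Rightarrow> real" where
  "fT V k E b x = Max ((\<lambda>S. \<Sum>i\<in>S. b i * x i) ` maximal_unions V k E)"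

definition ET :: "nat set \<Rightarrow> nat \<Rightarrow> (nat \<Rightarrow> nat set) \<Rightarrow> (nat \<Rightarrow> real) \<Rightarrow> ennreal" where
  "ET V k E b = (\<integral>\<^sup>+ x. indicator {x. \<forall>i<k. 0 \<le> x i} x *
       ennreal (fT V k E b x * exp (- (\<Sum>i<k. x i))) \<partial>(PiM {..<k} (\<lambda>_. lborel)))"

definition admissible :: "nat \<Rightarrow> real \<Rightarrow> bool" where
  "admissible k c \<longleftrightarrow> 0 < c \<and>
     (\<exists>V E b. is_biased_tree V k E b \<and> ET V k E b < ennreal c)"

text \<open>The specific tree: v = 0, w = 1, leaves 2,3,4,5.\<close>
definition tree5_E :: "nat \<Rightarrow> nat set" where
  "tree5_E i = (if i = 0 then {0,2} else if i = 1 then {0,3} else if i = 2 then {0,1}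
                else if i = 3 then {1,4} else {1,5})"

definition tree5_b :: "real \<Rightarrow> nat \<Rightarrow> real" where
  "tree5_b \<beta> i = (if i = 2 then 1 - 4 * \<beta> else \<beta>)"

end

theory Submission
  imports Defs "HOL-Probability.Distributions" "HOL-Real_Asymp.Real_Asymp"
begin


lemma E1:
  fixes p a :: real assumes p: "p > 0"
  shows "(\<integral>\<^sup>+y. ennreal (exp (-(p*y))) * indicator {a..} y \<partial>lborel) = ennreal (exp (-(p*a)) / p)"
proof -
  have "(\<integral>\<^sup>+y. ennreal (exp (-(p*y))) * indicator {a..} y \<partial>lborel) = ennreal (0 - (- exp (-(p*a)) / p))"
  proof (rule nn_integral_FTC_atLeast[where F="\<lambda>y. - exp (-(p*y)) / p"])
    show "(\<lambda>y. exp (-(p*y))) \<in> borel_measurable borel" by measurable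
    fix x show "((\<lambda>y. - exp (-(p*y)) / p) has_real_derivative exp (-(p*x))) (at x)"
      using p by (auto intro!: derivative_eq_intros simp: field_simps)
    show "0 \<le> exp (-(p*x))" by simp
  next
    show "((\<lambda>y. - exp (-(p*y)) / p) \<longlongrightarrow> 0) at_top" using p by real_asymp
  qed
  then show ?thesis by simp
qed

lemma E2:
  fixes p a :: real assumes p: "p > 0" and a: "0 \<le> a"
  shows "(\<integral>\<^sup>+y. ennreal (exp (-(p*y))) * indicator {0..a} y \<partial>lborel) = ennreal ((1 - exp (-(p*a))) / p)"
proof -
  have "(\<integral>\<^sup>+y. ennreal (exp (-(p*y))) * indicator {0..a} y \<partial>lborel) = ennreal ((- exp (-(p*a)) / p) - (- exp (-(p*0)) / p))"
  proof (rule nn_integral_FTC_Icc[where F="\<lambda>y. - exp (-(p*y)) / p"])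
    show "(\<lambda>y. exp (-(p*y))) \<in> borel_measurable borel" by measurable
    fix x show "((\<lambda>y. - exp (-(p*y)) / p) has_real_derivative exp (-(p*x))) (at x)"
      using p by (auto intro!: derivative_eq_intros simp: field_simps)
    show "0 \<le> exp (-(p*x))" by simp
  qed (use a in auto)
  then show ?thesis by (simp add: diff_divide_distrib)
qed

lemma LIN:
  fixes k A :: real assumes k: "k > 0" and A: "0 \<le> A"
  shows "(\<integral>\<^sup>+y. ennreal ((k*y - A) * exp (-y)) * indicator {A/k..} y \<partial>lborel) = ennreal (k * exp (-(A/k)))"
proof -
  have "(\<integral>\<^sup>+y. ennreal ((k*y - A) * exp (-y)) * indicator {A/k..} y \<partial>lborel) = ennreal (0 - (-(k*(A/k) - A + k) * exp (-(A/k))))"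
  proof (rule nn_integral_FTC_atLeast[where F="\<lambda>y. -(k*y - A + k) * exp (-y)"])
    show "(\<lambda>y. (k*y - A) * exp (-y)) \<in> borel_measurable borel" by measurable
    fix x show "((\<lambda>y. -(k*y - A + k) * exp (-y)) has_real_derivative (k*x - A) * exp (-x)) (at x)"
      by (auto intro!: derivative_eq_intros simp: field_simps)
    assume "A/k \<le> x" then show "0 \<le> (k*x - A) * exp (-x)"
      using k by (simp add: field_simps)
  next
    show "((\<lambda>y. -(k*y - A + k) * exp (-y)) \<longlongrightarrow> 0) at_top" by real_asymp
  qed
  then show ?thesis using k by simp
qed

lemma MAXc:
  fixes k A L :: real assumes k: "k > 0" and A: "0 \<le> A" and L: "0 \<le> L"
  shows "(\<integral>\<^sup>+y. ennreal (if 0 \<le> y then (L + max A (k*y)) * exp (-y) else 0) \<partial>lborel)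
     = ennreal (L + A + k * exp (-(A/k)))"
proof -
  have eq: "ennreal (if 0 \<le> y then (L + max A (k*y)) * exp (-y) else 0) =
     ennreal (L + A) * (ennreal (exp (-(1*y))) * indicator {0..} y) +
     ennreal ((k*y - A) * exp (-y)) * indicator {A/k..} y" for y
  proof (cases "0 \<le> y")
    case True
    show ?thesis
    proof (cases "A/k \<le> y")
      case True2: True
      have "A \<le> k*y" using True2 k by (simp add: field_simps)
      then show ?thesis using True True2 A L k
        by (simp add: max_def ennreal_mult[symmetric] ennreal_plus[symmetric] algebra_simps del: ennreal_plus)
    next
      case False
      have "k*y < A" using False k by (simp add: field_simps)
      then show ?thesis using True False A L k
        by (simp add: max_def ennreal_mult[symmetric] algebra_simps)
    qed
  next
    case False
    have "y < A/k" using False A k by (smt (verit) divide_nonneg_pos)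
    then show ?thesis using False by simp
  qed
  have "(\<integral>\<^sup>+y. ennreal (if 0 \<le> y then (L + max A (k*y)) * exp (-y) else 0) \<partial>lborel)
     = (\<integral>\<^sup>+y. ennreal (L + A) * (ennreal (exp (-(1*y))) * indicator {0..} y) +
     ennreal ((k*y - A) * exp (-y)) * indicator {A/k..} y \<partial>lborel)"
    by (simp only: eq)
  also have "\<dots> = ennreal (L + A) * (\<integral>\<^sup>+y. ennreal (exp (-(1*y))) * indicator {0..} y \<partial>lborel)
     + (\<integral>\<^sup>+y. ennreal ((k*y - A) * exp (-y)) * indicator {A/k..} y \<partial>lborel)"
    by (subst nn_integral_add) (auto intro!: nn_integral_cmult)
  also have "\<dots> = ennreal (L + A) * ennreal 1 + ennreal (k * exp (-(A/k)))"
    using E1[of 1 0] LIN[OF k A] by simp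
  also have "\<dots> = ennreal (L + A + k * exp (-(A/k)))"
    using A L k by (simp add: ennreal_plus[symmetric] del: ennreal_plus)
  finally show ?thesis .
qed

lemma alg1: "1+(d::real) \<noteq> 0 \<Longrightarrow> Q/(1+d) + d/(1+d)*(P*Q) = ((1-P)/(1+d) + P)*Q"
  by (simp add: divide_simps) (simp add: algebra_simps)

lemma expl: "(p::real) > 0 \<Longrightarrow> ((\<lambda>y. exp (-(p*y))) \<longlongrightarrow> 0) at_top" by real_asymp

definition Kf :: "real \<Rightarrow> real \<Rightarrow> real" where
  "Kf d s = (1 - exp (-((1+d)* s))) / (1+d) + exp (-((1+d)* s))"

lemma Kf_nonneg: "0 \<le> d \<Longrightarrow> 0 \<le> s \<Longrightarrow> 0 \<le> Kf d s"
  unfolding Kf_def by (intro add_nonneg_nonneg divide_nonneg_nonneg) auto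

lemma Kint:
  fixes d s :: real assumes d: "0 \<le> d" and s: "0 \<le> s"
  shows "(\<integral>\<^sup>+y. ennreal (exp (-(d * min s y)) * exp (-y)) * indicator {0..} y \<partial>lborel) = ennreal (Kf d s)"
proof -
  have eq: "ennreal (exp (-(d * min s y)) * exp (-y)) * indicator {0..} y =
     ennreal (exp (-((1+d)*y))) * indicator {0..s} y +
     ennreal (exp (-(d* s))) * (ennreal (exp (-(1*y))) * indicator {s<..} y)" for y
    using s by (auto simp: indicator_def min_def ennreal_mult[symmetric] mult_exp_exp algebra_simps)
  have ae: "AE y in lborel. ennreal (exp (-(1*y))) * indicator {s<..} y = ennreal (exp (-(1*y))) * indicator {s..} y"
    using AE_lborel_singleton[of s] by eventually_elim (auto simp: indicator_def)
  have "(\<integral>\<^sup>+y. ennreal (exp (-(d * min s y)) * exp (-y)) * indicator {0..} y \<partial>lborel)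
     = (\<integral>\<^sup>+y. ennreal (exp (-((1+d)*y))) * indicator {0..s} y \<partial>lborel) +
       ennreal (exp (-(d* s))) * (\<integral>\<^sup>+y. ennreal (exp (-(1*y))) * indicator {s<..} y \<partial>lborel)"
    by (simp only: eq, subst nn_integral_add) (auto intro!: nn_integral_cmult)
  also have "(\<integral>\<^sup>+y. ennreal (exp (-(1*y))) * indicator {s<..} y \<partial>lborel) = (\<integral>\<^sup>+y. ennreal (exp (-(1*y))) * indicator {s..} y \<partial>lborel)"
    by (rule nn_integral_cong_AE[OF ae])
  also have "\<dots> = ennreal (exp (-(1* s)) / 1)" by (rule E1) simp
  also have "(\<integral>\<^sup>+y. ennreal (exp (-((1+d)*y))) * indicator {0..s} y \<partial>lborel) = ennreal ((1 - exp (-((1+d)* s))) / (1+d))"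
    using d s by (intro E2) auto
  also have "ennreal ((1 - exp (-((1+d)* s))) / (1+d)) + ennreal (exp (-(d* s))) * ennreal (exp (-(1* s)) / 1)
      = ennreal (Kf d s)"
  proof -
    have ds: "0 \<le> (1+d) * s" using d s by simp
    have nn: "0 \<le> (1 - exp (-((1+d)* s)))/(1+d)" using d ds by (auto intro!: divide_nonneg_nonneg)
    have "ennreal (exp (-(d* s))) * ennreal (exp (-(1* s)) / 1) = ennreal (exp (-((1+d)* s)))"
      by (simp add: ennreal_mult[symmetric] mult_exp_exp algebra_simps)
    then show ?thesis unfolding Kf_def using nn by (simp add: ennreal_plus)
  qed
  finally show ?thesis .
qed

lemma KI:
  fixes d :: real assumes d: "0 \<le> d"
  shows "(\<integral>\<^sup>+y. ennreal (Kf d y * exp (-y)) * indicator {0..} y \<partial>lborel) = ennreal (2/(2+d))"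
proof -
  let ?F = "\<lambda>y. - exp (-y) / (1+d) - d / ((1+d)*(2+d)) * exp (-((2+d)*y))"
  have "(\<integral>\<^sup>+y. ennreal (Kf d y * exp (-y)) * indicator {0..} y \<partial>lborel) = ennreal (0 - ?F 0)"
  proof (rule nn_integral_FTC_atLeast[where F="?F"])
    show "(\<lambda>y. Kf d y * exp (-y)) \<in> borel_measurable borel" unfolding Kf_def by measurable
    fix x show "(?F has_real_derivative Kf d x * exp (-x)) (at x)"
    proof -
      have D: "(?F has_real_derivative (exp (-x) / (1+d) + d/(1+d) * exp (-((2+d)*x)))) (at x)"
      proof -
        have n1: "1+d \<noteq> 0" "2+d \<noteq> 0" using d by auto
        show ?thesis
          using n1 apply (auto intro!: derivative_eq_intros)
          apply (simp add: divide_simps)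
          apply (simp add: algebra_simps)?
          done
      qed
      have e: "exp (-((2+d)*x)) = exp (-((1+d)*x)) * exp (-x)"
        by (simp add: mult_exp_exp algebra_simps)
      have "exp (-x) / (1+d) + d/(1+d) * exp (-((2+d)*x)) = Kf d x * exp (-x)"
        unfolding Kf_def e using d by (intro alg1) auto
      with D show ?thesis by simp
    qed
    assume "0 \<le> x" then show "0 \<le> Kf d x * exp (-x)" using Kf_nonneg[OF d] by simp
  next
    have "((\<lambda>y. - exp (- (1*y)) / (1 + d) -
           d / ((1 + d) * (2 + d)) * exp (- ((2 + d) * y))) \<longlongrightarrow> - 0 / (1+d) - d / ((1 + d) * (2 + d)) * 0) at_top"
      using d by (intro tendsto_intros expl) auto
    then show "(?F \<longlongrightarrow> 0) at_top" by simp
  qed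
  also have "0 - ?F 0 = 2/(2+d)"
  proof -
    have p: "(1+d) \<noteq> 0" "2+d \<noteq> 0" using d by auto
    then show ?thesis by (simp add: divide_simps)
  qed
  finally show ?thesis .
qed

lemma GEN:
  fixes al be ga I :: real and Q :: "real \<Rightarrow> real"
  assumes al: "0 \<le> al" and be: "0 \<le> be" and ga: "0 \<le> ga" and I: "0 \<le> I"
    and Qm: "Q \<in> borel_measurable borel" and Qn: "\<And>y. 0 \<le> y \<Longrightarrow> 0 \<le> Q y"
    and QI: "(\<integral>\<^sup>+y. ennreal (Q y * exp (-y)) * indicator {0..} y \<partial>lborel) = ennreal I"
  shows "(\<integral>\<^sup>+y. ennreal (if 0 \<le> y then (al + be*y + ga * Q y) * exp (-y) else 0) \<partial>lborel)
     = ennreal (al + be + ga * I)"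
proof -
  note Qm[measurable]
  have eq: "ennreal (if 0 \<le> y then (al + be*y + ga * Q y) * exp (-y) else 0) =
     ennreal al * (ennreal (exp (-(1*y))) * indicator {0..} y) +
     (ennreal be * (ennreal (y^1 * exp (-y)) * indicator {0..} y) +
      ennreal ga * (ennreal (Q y * exp (-y)) * indicator {0..} y))" for y
  proof (cases "0 \<le> y")
    case True
    then have "0 \<le> Q y" by (rule Qn)
    then show ?thesis using True al be ga
      by (simp add: ennreal_mult[symmetric] ennreal_plus[symmetric] algebra_simps del: ennreal_plus)
  qed simp
  have "(\<integral>\<^sup>+y. ennreal (if 0 \<le> y then (al + be*y + ga * Q y) * exp (-y) else 0) \<partial>lborel)
     = ennreal al * (\<integral>\<^sup>+y. ennreal (exp (-(1*y))) * indicator {0..} y \<partial>lborel) +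
      (ennreal be * (\<integral>\<^sup>+y. ennreal (y^1 * exp (-y)) * indicator {0..} y \<partial>lborel) +
       ennreal ga * (\<integral>\<^sup>+y. ennreal (Q y * exp (-y)) * indicator {0..} y \<partial>lborel))"
    unfolding eq
    apply (subst nn_integral_add)
      apply measurable
    apply (subst nn_integral_add)
      apply measurable
    apply (simp add: nn_integral_cmult)
    done
  also have "\<dots> = ennreal al * ennreal 1 + (ennreal be * ennreal 1 + ennreal ga * ennreal I)"
    using E1[of 1 0] nn_intergal_power_times_exp_Ici[of 1] QI by simp
  also have "\<dots> = ennreal (al + be + ga * I)"
    using al be ga I by (simp add: ennreal_mult[symmetric] ennreal_plus[symmetric] del: ennreal_plus)
  finally show ?thesis .
qed



interpretation lb: product_sigma_finite "\<lambda>_::nat. lborel :: real measure"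
  by standard

lemma meas_upd:
  fixes f :: "(nat \<Rightarrow> real) \<Rightarrow> ennreal"
  assumes f: "f \<in> borel_measurable (PiM (insert i I) (\<lambda>_. lborel))" and i: "i \<notin> I"
  shows "(\<lambda>x. f (x(i := a))) \<in> borel_measurable (PiM I (\<lambda>_. lborel))"
proof -
  have "(\<lambda>x. x (i := a)) \<in> measurable (PiM I (\<lambda>_. lborel)) (PiM (insert i I) (\<lambda>_. lborel::real measure))"
    by (rule measurable_fun_upd[where J=I and f="\<lambda>x. x" and h="\<lambda>_. a", simplified]) auto
  from measurable_comp[OF this f] show ?thesis by (simp add: comp_def)
qed

lemma nest5:
  fixes H :: "real \<Rightarrow> real \<Rightarrow> real \<Rightarrow> real \<Rightarrow> real \<Rightarrow> ennreal"
  assumes m: "(\<lambda>x::nat\<Rightarrow>real. H (x 0) (x 1) (x 3) (x 4) (x 2)) \<in> borel_measurable (PiM {..<5::nat} (\<lambda>_. lborel))"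
  shows "(\<integral>\<^sup>+x. H (x 0) (x 1) (x 3) (x 4) (x 2) \<partial>PiM {..<5::nat} (\<lambda>_. lborel)) =
    (\<integral>\<^sup>+a. \<integral>\<^sup>+b. \<integral>\<^sup>+d. \<integral>\<^sup>+e. \<integral>\<^sup>+c. H a b d e c \<partial>lborel \<partial>lborel \<partial>lborel \<partial>lborel \<partial>lborel)"
proof -
  have U: "{..<5::nat} = insert 0 (insert 1 (insert 3 (insert 4 {2})))" by auto
  have m0: "(\<lambda>x::nat\<Rightarrow>real. H (x 0) (x 1) (x 3) (x 4) (x 2)) \<in> borel_measurable (PiM (insert 0 (insert 1 (insert 3 (insert 4 {2})))) (\<lambda>_. lborel))"
    using m unfolding U .
  have m1: "(\<lambda>x::nat\<Rightarrow>real. H a (x 1) (x 3) (x 4) (x 2)) \<in> borel_measurable (PiM (insert (1::nat) (insert 3 (insert 4 {2}))) (\<lambda>_. lborel))" for a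
    using meas_upd[OF m0, of a] by simp
  have m2: "(\<lambda>x::nat\<Rightarrow>real. H a b (x 3) (x 4) (x 2)) \<in> borel_measurable (PiM (insert (3::nat) (insert 4 {2})) (\<lambda>_. lborel))" for a b
    using meas_upd[OF m1[of a], of b] by simp
  have m3: "(\<lambda>x::nat\<Rightarrow>real. H a b d (x 4) (x 2)) \<in> borel_measurable (PiM (insert (4::nat) {2}) (\<lambda>_. lborel))" for a b d
    using meas_upd[OF m2[of a b], of d] by simp
  have m4: "(\<lambda>x::nat\<Rightarrow>real. H a b d e (x 2)) \<in> borel_measurable (PiM {2} (\<lambda>_. lborel))" for a b d e
    using meas_upd[OF m3[of a b d], of e] by simp
  have g: "(\<lambda>c::real. (\<lambda>j::nat. if j = 2 then c else undefined)) \<in> measurable lborel (PiM {2} (\<lambda>_. lborel))"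
    by (rule measurable_PiM_single') (auto simp: PiE_def extensional_def)
  have m5: "(\<lambda>c. H a b d e c) \<in> borel_measurable lborel" for a b d e
    using measurable_comp[OF g m4[of a b d e]] by (simp add: comp_def)
  have "(\<integral>\<^sup>+x. H (x 0) (x 1) (x 3) (x 4) (x 2) \<partial>PiM {..<5::nat} (\<lambda>_. lborel)) =
     (\<integral>\<^sup>+a. \<integral>\<^sup>+x. H a (x 1) (x 3) (x 4) (x 2) \<partial>PiM (insert (1::nat) (insert 3 (insert 4 {2}))) (\<lambda>_. lborel) \<partial>lborel)"
    unfolding U by (subst lb.product_nn_integral_insert_rev[OF _ _ m0]) auto
  also have "\<dots> = (\<integral>\<^sup>+a. \<integral>\<^sup>+b. \<integral>\<^sup>+x. H a b (x 3) (x 4) (x 2) \<partial>PiM (insert (3::nat) (insert 4 {2})) (\<lambda>_. lborel) \<partial>lborel \<partial>lborel)"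
    by (intro nn_integral_cong, subst lb.product_nn_integral_insert_rev[OF _ _ m1]) auto
  also have "\<dots> = (\<integral>\<^sup>+a. \<integral>\<^sup>+b. \<integral>\<^sup>+d. \<integral>\<^sup>+x. H a b d (x 4) (x 2) \<partial>PiM (insert (4::nat) {2}) (\<lambda>_. lborel) \<partial>lborel \<partial>lborel \<partial>lborel)"
    by (intro nn_integral_cong, subst lb.product_nn_integral_insert_rev[OF _ _ m2]) auto
  also have "\<dots> = (\<integral>\<^sup>+a. \<integral>\<^sup>+b. \<integral>\<^sup>+d. \<integral>\<^sup>+e. \<integral>\<^sup>+x. H a b d e (x 2) \<partial>PiM {2::nat} (\<lambda>_. lborel) \<partial>lborel \<partial>lborel \<partial>lborel \<partial>lborel)"
    by (intro nn_integral_cong, subst lb.product_nn_integral_insert_rev[OF _ _ m3]) auto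
  also have "\<dots> = (\<integral>\<^sup>+a. \<integral>\<^sup>+b. \<integral>\<^sup>+d. \<integral>\<^sup>+e. \<integral>\<^sup>+c. H a b d e c \<partial>lborel \<partial>lborel \<partial>lborel \<partial>lborel \<partial>lborel)"
    by (intro nn_integral_cong, subst lb.product_nn_integral_singleton[OF m5]) auto
  finally show ?thesis .
qed



definition Psi :: "real \<Rightarrow> real \<Rightarrow> real \<Rightarrow> real \<Rightarrow> real \<Rightarrow> real \<Rightarrow> real \<Rightarrow> real" where
  "Psi be k a b c d e = (if 0 \<le> a \<and> 0 \<le> b \<and> 0 \<le> c \<and> 0 \<le> d \<and> 0 \<le> e then
     (be * (max a b + max d e) + max (be * (min a b + min d e)) (k * c)) * exp (-(a+b+c+d+e)) else 0)"

definition Psi4 :: "real \<Rightarrow> real \<Rightarrow> real \<Rightarrow> real \<Rightarrow> real \<Rightarrow> real \<Rightarrow> real" where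
  "Psi4 be k a b d e = (if 0 \<le> a \<and> 0 \<le> b \<and> 0 \<le> d \<and> 0 \<le> e then
     (be * (a+b+d+e) + k * (exp (-(be/k * min a b)) * exp (-(be/k * min d e)))) * exp (-(a+b+d+e)) else 0)"

definition Psi3 :: "real \<Rightarrow> real \<Rightarrow> real \<Rightarrow> real \<Rightarrow> real \<Rightarrow> real" where
  "Psi3 be k a b d = (if 0 \<le> a \<and> 0 \<le> b \<and> 0 \<le> d then
     (be * (a+b+d) + be + k * exp (-(be/k * min a b)) * Kf (be/k) d) * exp (-(a+b+d)) else 0)"

definition Psi2 :: "real \<Rightarrow> real \<Rightarrow> real \<Rightarrow> real \<Rightarrow> real" where
  "Psi2 be k a b = (if 0 \<le> a \<and> 0 \<le> b then
     (be * (a+b) + 2*be + k * exp (-(be/k * min a b)) * (2/(2+be/k))) * exp (-(a+b)) else 0)"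

definition Psi1 :: "real \<Rightarrow> real \<Rightarrow> real \<Rightarrow> real" where
  "Psi1 be k a = (if 0 \<le> a then (be * a + 3*be + k * (2/(2+be/k)) * Kf (be/k) a) * exp (-a) else 0)"

lemma em: "0 \<le> x \<Longrightarrow> y = x * z \<Longrightarrow> ennreal y = ennreal x * ennreal z"
  by (simp add: ennreal_mult')

lemma C1:
  assumes be: "0 \<le> be" and k: "0 < k"
  shows "(\<integral>\<^sup>+c. ennreal (Psi be k a b c d e) \<partial>lborel) = ennreal (Psi4 be k a b d e)"
proof (cases "0 \<le> a \<and> 0 \<le> b \<and> 0 \<le> d \<and> 0 \<le> e")
  case True
  let ?L = "be * (max a b + max d e)" and ?A = "be * (min a b + min d e)"
  have L: "0 \<le> ?L" and A: "0 \<le> ?A" using True be by auto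
  have eq: "ennreal (Psi be k a b c d e) = ennreal (exp (-(a+b+d+e))) *
      ennreal (if 0 \<le> c then (?L + max ?A (k*c)) * exp (-c) else 0)" for c
  proof (rule em)
    have ex: "exp (-(a+b+c+d+e)) = exp (-(a+b+d+e)) * exp (-c)"
      by (simp add: mult_exp_exp algebra_simps)
    show "Psi be k a b c d e = exp (-(a+b+d+e)) * (if 0 \<le> c then (?L + max ?A (k*c)) * exp (-c) else 0)"
      using True by (simp add: Psi_def ex[simplified])
  qed simp
  have "(\<integral>\<^sup>+c. ennreal (Psi be k a b c d e) \<partial>lborel) = ennreal (exp (-(a+b+d+e))) *
      (\<integral>\<^sup>+c. ennreal (if 0 \<le> c then (?L + max ?A (k*c)) * exp (-c) else 0) \<partial>lborel)"
    unfolding eq by (rule nn_integral_cmult) measurable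
  also have "\<dots> = ennreal (exp (-(a+b+d+e))) * ennreal (?L + ?A + k * exp (-(?A/k)))"
    using MAXc[OF k A L] by simp
  also have "\<dots> = ennreal (Psi4 be k a b d e)"
  proof -
    have s: "?L + ?A = be * (a+b+d+e)" by (simp add: max_def min_def algebra_simps)
    have x0: "-(?A/k) = (-(be/k * min a b)) + (-(be/k * min d e))"
      by (simp add: add_divide_distrib algebra_simps)
    have x: "exp (-(?A/k)) = exp (-(be/k * min a b)) * exp (-(be/k * min d e))"
      by (simp only: x0 exp_add)
    show ?thesis
      by (rule sym, rule em) (use True in \<open>simp_all add: Psi4_def s x\<close>)
  qed
  finally show ?thesis .
next
  case False
  then have "Psi be k a b c d e = 0" for c by (auto simp: Psi_def)
  moreover have "Psi4 be k a b d e = 0" using False by (auto simp: Psi4_def)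
  ultimately show ?thesis by simp
qed

lemma C2:
  assumes be: "0 \<le> be" and k: "0 < k"
  shows "(\<integral>\<^sup>+e. ennreal (Psi4 be k a b d e) \<partial>lborel) = ennreal (Psi3 be k a b d)"
proof (cases "0 \<le> a \<and> 0 \<le> b \<and> 0 \<le> d")
  case True
  have dl: "0 \<le> be/k" using be k by simp
  have eq: "ennreal (Psi4 be k a b d e) = ennreal (exp (-(a+b+d))) *
     ennreal (if 0 \<le> e then (be*(a+b+d) + be*e + (k * exp (-(be/k * min a b))) * (\<lambda>y. exp (-(be/k * min d y))) e) * exp (-e) else 0)" for e
  proof (rule em)
    have ex: "exp (-(a+b+d+e)) = exp (-(a+b+d)) * exp (-e)" by (simp add: mult_exp_exp algebra_simps)
    show "Psi4 be k a b d e = exp (-(a+b+d)) * (if 0 \<le> e then (be*(a+b+d) + be*e + (k * exp (-(be/k * min a b))) * (\<lambda>y. exp (-(be/k * min d y))) e) * exp (-e) else 0)"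
      unfolding Psi4_def ex using True by (simp add: algebra_simps)
  qed simp
  have "(\<integral>\<^sup>+e. ennreal (Psi4 be k a b d e) \<partial>lborel) = ennreal (exp (-(a+b+d))) *
     (\<integral>\<^sup>+e. ennreal (if 0 \<le> e then (be*(a+b+d) + be*e + (k * exp (-(be/k * min a b))) * (\<lambda>y. exp (-(be/k * min d y))) e) * exp (-e) else 0) \<partial>lborel)"
    unfolding eq apply (rule nn_integral_cmult) apply (unfold Kf_def)? apply measurable done
  also have "\<dots> = ennreal (exp (-(a+b+d))) * ennreal (be*(a+b+d) + be + (k * exp (-(be/k * min a b))) * (Kf (be/k) d))"
  proof -
    have "(\<integral>\<^sup>+e. ennreal (if 0 \<le> e then (be*(a+b+d) + be*e + (k * exp (-(be/k * min a b))) * (\<lambda>y. exp (-(be/k * min d y))) e) * exp (-e) else 0) \<partial>lborel)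
      = ennreal (be*(a+b+d) + be + (k * exp (-(be/k * min a b))) * (Kf (be/k) d))"
    proof (rule GEN)
      show "(\<lambda>y. exp (-(be/k * min d y))) \<in> borel_measurable borel" unfolding Kf_def by measurable
      show "(\<integral>\<^sup>+y. ennreal ((\<lambda>y. exp (-(be/k * min d y))) y * exp (-y)) * indicator {0..} y \<partial>lborel) = ennreal (Kf (be/k) d)"
        using Kint[OF dl, of d] True by simp
    qed (use True be k dl in \<open>auto intro!: Kf_nonneg divide_nonneg_nonneg\<close>)
    then show ?thesis by simp
  qed
  also have "\<dots> = ennreal (Psi3 be k a b d)"
    by (rule sym, rule em) (use True in \<open>simp_all add: Psi3_def algebra_simps\<close>)
  finally show ?thesis .
next
  case False
  then have "Psi4 be k a b d e = 0" for e by (auto simp: Psi4_def)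
  moreover have "Psi3 be k a b d = 0" using False by (auto simp: Psi3_def)
  ultimately show ?thesis by simp
qed

lemma C3:
  assumes be: "0 \<le> be" and k: "0 < k"
  shows "(\<integral>\<^sup>+d. ennreal (Psi3 be k a b d) \<partial>lborel) = ennreal (Psi2 be k a b)"
proof (cases "0 \<le> a \<and> 0 \<le> b")
  case True
  have dl: "0 \<le> be/k" using be k by simp
  have eq: "ennreal (Psi3 be k a b d) = ennreal (exp (-(a+b))) *
     ennreal (if 0 \<le> d then (be*(a+b) + be + be*d + (k * exp (-(be/k * min a b))) * (Kf (be/k)) d) * exp (-d) else 0)" for d
  proof (rule em)
    have ex: "exp (-(a+b+d)) = exp (-(a+b)) * exp (-d)" by (simp add: mult_exp_exp algebra_simps)
    show "Psi3 be k a b d = exp (-(a+b)) * (if 0 \<le> d then (be*(a+b) + be + be*d + (k * exp (-(be/k * min a b))) * (Kf (be/k)) d) * exp (-d) else 0)"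
      unfolding Psi3_def ex using True by (simp add: algebra_simps)
  qed simp
  have "(\<integral>\<^sup>+d. ennreal (Psi3 be k a b d) \<partial>lborel) = ennreal (exp (-(a+b))) *
     (\<integral>\<^sup>+d. ennreal (if 0 \<le> d then (be*(a+b) + be + be*d + (k * exp (-(be/k * min a b))) * (Kf (be/k)) d) * exp (-d) else 0) \<partial>lborel)"
    unfolding eq apply (rule nn_integral_cmult) apply (unfold Kf_def)? apply measurable done
  also have "\<dots> = ennreal (exp (-(a+b))) * ennreal (be*(a+b) + be + be + (k * exp (-(be/k * min a b))) * (2/(2+be/k)))"
  proof -
    have "(\<integral>\<^sup>+d. ennreal (if 0 \<le> d then (be*(a+b) + be + be*d + (k * exp (-(be/k * min a b))) * (Kf (be/k)) d) * exp (-d) else 0) \<partial>lborel)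
      = ennreal (be*(a+b) + be + be + (k * exp (-(be/k * min a b))) * (2/(2+be/k)))"
    proof (rule GEN)
      show "(Kf (be/k)) \<in> borel_measurable borel" unfolding Kf_def by measurable
      show "(\<integral>\<^sup>+y. ennreal ((Kf (be/k)) y * exp (-y)) * indicator {0..} y \<partial>lborel) = ennreal (2/(2+be/k))"
        using KI[OF dl] by simp
    qed (use True be k dl in \<open>auto intro!: Kf_nonneg divide_nonneg_nonneg\<close>)
    then show ?thesis by simp
  qed
  also have "\<dots> = ennreal (Psi2 be k a b)"
    by (rule sym, rule em) (use True in \<open>simp_all add: Psi2_def algebra_simps\<close>)
  finally show ?thesis .
next
  case False
  then have "Psi3 be k a b d = 0" for d by (auto simp: Psi3_def)
  moreover have "Psi2 be k a b = 0" using False by (auto simp: Psi2_def)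
  ultimately show ?thesis by simp
qed

lemma C4:
  assumes be: "0 \<le> be" and k: "0 < k"
  shows "(\<integral>\<^sup>+b. ennreal (Psi2 be k a b) \<partial>lborel) = ennreal (Psi1 be k a)"
proof (cases "0 \<le> a")
  case True
  have dl: "0 \<le> be/k" using be k by simp
  have eq: "ennreal (Psi2 be k a b) = ennreal (exp (-(a))) *
     ennreal (if 0 \<le> b then (be*a + 2*be + be*b + (k * (2/(2+be/k))) * (\<lambda>y. exp (-(be/k * min a y))) b) * exp (-b) else 0)" for b
  proof (rule em)
    have ex: "exp (-(a+b)) = exp (-(a)) * exp (-b)" by (simp add: mult_exp_exp algebra_simps)
    show "Psi2 be k a b = exp (-(a)) * (if 0 \<le> b then (be*a + 2*be + be*b + (k * (2/(2+be/k))) * (\<lambda>y. exp (-(be/k * min a y))) b) * exp (-b) else 0)"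
      unfolding Psi2_def ex using True by (simp add: algebra_simps)
  qed simp
  have "(\<integral>\<^sup>+b. ennreal (Psi2 be k a b) \<partial>lborel) = ennreal (exp (-(a))) *
     (\<integral>\<^sup>+b. ennreal (if 0 \<le> b then (be*a + 2*be + be*b + (k * (2/(2+be/k))) * (\<lambda>y. exp (-(be/k * min a y))) b) * exp (-b) else 0) \<partial>lborel)"
    unfolding eq apply (rule nn_integral_cmult) apply (unfold Kf_def)? apply measurable done
  also have "\<dots> = ennreal (exp (-(a))) * ennreal (be*a + 2*be + be + (k * (2/(2+be/k))) * (Kf (be/k) a))"
  proof -
    have "(\<integral>\<^sup>+b. ennreal (if 0 \<le> b then (be*a + 2*be + be*b + (k * (2/(2+be/k))) * (\<lambda>y. exp (-(be/k * min a y))) b) * exp (-b) else 0) \<partial>lborel)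
      = ennreal (be*a + 2*be + be + (k * (2/(2+be/k))) * (Kf (be/k) a))"
    proof (rule GEN)
      show "(\<lambda>y. exp (-(be/k * min a y))) \<in> borel_measurable borel" unfolding Kf_def by measurable
      show "(\<integral>\<^sup>+y. ennreal ((\<lambda>y. exp (-(be/k * min a y))) y * exp (-y)) * indicator {0..} y \<partial>lborel) = ennreal (Kf (be/k) a)"
        using Kint[OF dl, of a] True by simp
    qed (use True be k dl in \<open>auto intro!: Kf_nonneg divide_nonneg_nonneg\<close>)
    then show ?thesis by simp
  qed
  also have "\<dots> = ennreal (Psi1 be k a)"
    by (rule sym, rule em) (use True in \<open>simp_all add: Psi1_def algebra_simps\<close>)
  finally show ?thesis .
next
  case False
  then have "Psi2 be k a b = 0" for b by (auto simp: Psi2_def)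
  moreover have "Psi1 be k a = 0" using False by (auto simp: Psi1_def)
  ultimately show ?thesis by simp
qed

lemma C5:
  assumes be: "0 \<le> be" and k: "0 < k"
  shows "(\<integral>\<^sup>+a. ennreal (Psi1 be k a) \<partial>lborel) = ennreal (3*be + be + k * (2/(2+be/k)) * (2/(2+be/k)))"
proof -
  have dl: "0 \<le> be/k" using be k by simp
  have eq: "Psi1 be k a = (if 0 \<le> a then (3*be + be*a + (k * (2/(2+be/k))) * Kf (be/k) a) * exp (-a) else 0)" for a
    by (simp add: Psi1_def algebra_simps)
  show ?thesis unfolding eq
  proof (rule GEN)
    show "Kf (be/k) \<in> borel_measurable borel" unfolding Kf_def by measurable
    show "(\<integral>\<^sup>+y. ennreal (Kf (be/k) y * exp (-y)) * indicator {0..} y \<partial>lborel) = ennreal (2/(2+be/k))"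
      using KI[OF dl] by simp
  qed (use be k dl in \<open>auto intro!: divide_nonneg_nonneg Kf_nonneg\<close>)
qed

lemma all_less5: "(\<forall>i<(5::nat). P i) \<longleftrightarrow> P 0 \<and> P 1 \<and> P 2 \<and> P 3 \<and> P 4"
  by (auto simp: less_Suc_eq numeral_eq_Suc)

lemma sum_less5: "(\<Sum>i<(5::nat). f i) = f 0 + f 1 + f 2 + f 3 + (f 4 :: real)"
  by (simp add: numeral_eq_Suc)

lemma integral_main:
  assumes be: "0 \<le> be" and k: "0 < k"
  shows "(\<integral>\<^sup>+x. indicator {x. \<forall>i<5. 0 \<le> x i} x * ennreal ((be*(max (x 0) (x 1) + max (x 3) (x 4)) +
      max (be*(min (x 0) (x 1) + min (x 3) (x 4))) (k * x 2)) * exp (-(\<Sum>i<5. x i))) \<partial>PiM {..<5::nat} (\<lambda>_. lborel))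
   = ennreal (3*be + be + k * (2/(2+be/k)) * (2/(2+be/k)))"
proof -
  define H where "H a b d e c = ennreal (Psi be k a b c d e)" for a b d e c
  have eq: "indicator {x. \<forall>i<5. 0 \<le> x i} x * ennreal ((be*(max (x 0) (x 1) + max (x 3) (x 4)) +
      max (be*(min (x 0) (x 1) + min (x 3) (x 4))) (k * x 2)) * exp (-(\<Sum>i<5. x i)))
      = H (x 0) (x 1) (x 3) (x 4) (x 2)" for x :: "nat \<Rightarrow> real"
    by (simp add: H_def Psi_def all_less5 sum_less5 indicator_def algebra_simps)
  have m: "(\<lambda>x. H (x 0) (x 1) (x 3) (x 4) (x 2)) \<in> borel_measurable (PiM {..<5::nat} (\<lambda>_. lborel))"
    unfolding H_def Psi_def by measurable
  have "(\<integral>\<^sup>+x. indicator {x. \<forall>i<5. 0 \<le> x i} x * ennreal ((be*(max (x 0) (x 1) + max (x 3) (x 4)) +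
      max (be*(min (x 0) (x 1) + min (x 3) (x 4))) (k * x 2)) * exp (-(\<Sum>i<5. x i))) \<partial>PiM {..<5::nat} (\<lambda>_. lborel))
    = (\<integral>\<^sup>+x. H (x 0) (x 1) (x 3) (x 4) (x 2) \<partial>PiM {..<5::nat} (\<lambda>_. lborel))"
    by (simp only: eq)
  also have "\<dots> = (\<integral>\<^sup>+a. \<integral>\<^sup>+b. \<integral>\<^sup>+d. \<integral>\<^sup>+e. \<integral>\<^sup>+c. H a b d e c \<partial>lborel \<partial>lborel \<partial>lborel \<partial>lborel \<partial>lborel)"
    by (rule nest5[OF m])
  also have "\<dots> = (\<integral>\<^sup>+a. \<integral>\<^sup>+b. \<integral>\<^sup>+d. \<integral>\<^sup>+e. ennreal (Psi4 be k a b d e) \<partial>lborel \<partial>lborel \<partial>lborel \<partial>lborel)"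
    unfolding H_def by (simp add: C1[OF be k])
  also have "\<dots> = (\<integral>\<^sup>+a. \<integral>\<^sup>+b. \<integral>\<^sup>+d. ennreal (Psi3 be k a b d) \<partial>lborel \<partial>lborel \<partial>lborel)"
    by (simp add: C2[OF be k])
  also have "\<dots> = (\<integral>\<^sup>+a. \<integral>\<^sup>+b. ennreal (Psi2 be k a b) \<partial>lborel \<partial>lborel)"
    by (simp add: C3[OF be k])
  also have "\<dots> = (\<integral>\<^sup>+a. ennreal (Psi1 be k a) \<partial>lborel)"
    by (simp add: C4[OF be k])
  also have "\<dots> = ennreal (3*be + be + k * (2/(2+be/k)) * (2/(2+be/k)))"
    by (rule C5[OF be k])
  finally show ?thesis .
qed



lemma less5: "(i::nat) < 5 \<longleftrightarrow> i = 0 \<or> i = 1 \<or> i = 2 \<or> i = 3 \<or> i = 4"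
  by auto

lemma tpath_single: "tpath k E [a]"
  by (simp add: tpath_def)

lemma tpath_Cons2: "tpath k E (a # b # rest) \<longleftrightarrow>
   (\<exists>i<k. E i = {a, b}) \<and> a \<notin> set (b # rest) \<and> tpath k E (b # rest)"
proof
  assume H: "tpath k E (a # b # rest)"
  show "(\<exists>i<k. E i = {a, b}) \<and> a \<notin> set (b # rest) \<and> tpath k E (b # rest)"
  proof (intro conjI)
    show "\<exists>i<k. E i = {a, b}" using H unfolding tpath_def by (metis Suc_less_eq length_Cons nth_Cons_0 nth_Cons_Suc zero_less_Suc)
    show "a \<notin> set (b # rest)" using H unfolding tpath_def by simp
    show "tpath k E (b # rest)" using H unfolding tpath_def
      by (auto, metis Suc_less_eq length_Cons nth_Cons_Suc)
  qed
next
  assume H: "(\<exists>i<k. E i = {a, b}) \<and> a \<notin> set (b # rest) \<and> tpath k E (b # rest)"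
  show "tpath k E (a # b # rest)" unfolding tpath_def
  proof (intro conjI allI impI)
    show "distinct (a # b # rest)" using H unfolding tpath_def by auto
    fix j assume j: "Suc j < length (a # b # rest)"
    show "\<exists>i<k. E i = {(a # b # rest) ! j, (a # b # rest) ! Suc j}"
    proof (cases j)
      case 0 then show ?thesis using H by simp
    next
      case (Suc j') then show ?thesis using H j unfolding tpath_def by simp
    qed
  qed simp
qed

lemma path_edges_single: "path_edges k E [a] = {}"
  by (simp add: path_edges_def)

lemma path_edges_Cons2: "path_edges k E (a # b # rest) =
   {i. i < k \<and> E i = {a, b}} \<union> path_edges k E (b # rest)"
proof (intro set_eqI iffI)
  fix i assume "i \<in> path_edges k E (a # b # rest)"
  then obtain j where i: "i < k" and j: "Suc j < length (a # b # rest)" and e: "E i = {(a # b # rest) ! j, (a # b # rest) ! Suc j}"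
    unfolding path_edges_def by blast
  show "i \<in> {i. i < k \<and> E i = {a, b}} \<union> path_edges k E (b # rest)"
  proof (cases j)
    case 0 then show ?thesis using i e by simp
  next
    case (Suc j')
    have "Suc j' < length (b # rest)" using j Suc by simp
    moreover have "E i = {(b # rest) ! j', (b # rest) ! Suc j'}" using e Suc by simp
    ultimately have "i \<in> path_edges k E (b # rest)" unfolding path_edges_def using i by blast
    then show ?thesis by blast
  qed
next
  fix i assume "i \<in> {i. i < k \<and> E i = {a, b}} \<union> path_edges k E (b # rest)"
  then show "i \<in> path_edges k E (a # b # rest)"
  proof
    assume H: "i \<in> {i. i < k \<and> E i = {a, b}}"
    have "Suc 0 < length (a # b # rest)" by simp
    moreover have "E i = {(a # b # rest) ! 0, (a # b # rest) ! Suc 0}" using H by simp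
    ultimately show ?thesis unfolding path_edges_def using H by blast
  next
    assume "i \<in> path_edges k E (b # rest)"
    then obtain j where "i < k" "Suc j < length (b # rest)" "E i = {(b # rest) ! j, (b # rest) ! Suc j}"
      unfolding path_edges_def by blast
    moreover have "Suc (Suc j) < length (a # b # rest)" using calculation by simp
    moreover have "E i = {(a # b # rest) ! Suc j, (a # b # rest) ! Suc (Suc j)}" using calculation by simp
    ultimately show ?thesis unfolding path_edges_def by blast
  qed
qed

lemma ex_less5: "(\<exists>i<(5::nat). P i) \<longleftrightarrow> P 0 \<or> P 1 \<or> P 2 \<or> P 3 \<or> P 4"
  by (auto simp: less5)

definition routes :: "nat list list list" where
  "routes = [[[0], [0,1], [0,2], [0,3], [0,1,4], [0,1,5]], [[1,0], [1], [1,0,2], [1,0,3], [1,4], [1,5]], [[2,0], [2,0,1], [2], [2,0,3], [2,0,1,4], [2,0,1,5]], [[3,0], [3,0,1], [3,0,2], [3], [3,0,1,4], [3,0,1,5]], [[4,1,0], [4,1], [4,1,0,2], [4,1,0,3], [4], [4,1,5]], [[5,1,0], [5,1], [5,1,0,2], [5,1,0,3], [5,1,4], [5]]]"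

lemma routes_ok:
  assumes "u \<in> {0..5::nat}" "v \<in> {0..5::nat}"
  shows "tpath 5 tree5_E (routes ! u ! v) \<and> hd (routes ! u ! v) = u \<and> last (routes ! u ! v) = v"
proof -
  have "u = 0 \<or> u = 1 \<or> u = 2 \<or> u = 3 \<or> u = 4 \<or> u = 5" using assms by auto
  moreover have "v = 0 \<or> v = 1 \<or> v = 2 \<or> v = 3 \<or> v = 4 \<or> v = 5" using assms by auto
  ultimately show ?thesis
    by (elim disjE) (simp_all add: routes_def tpath_Cons2 tpath_single ex_less5 tree5_E_def doubleton_eq_iff)
qed

lemma V6: "v \<in> {0..5::nat} \<longleftrightarrow> v = 0 \<or> v = 1 \<or> v = 2 \<or> v = 3 \<or> v = 4 \<or> v = 5"
  by auto

lemma degset: "{i. i < 5 \<and> v \<in> tree5_E i} =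
  (if v = 0 then {0,1,2} else if v = 1 then {2,3,4} else if v = 2 then {0} else if v = 3 then {1}
   else if v = 4 then {3} else if v = 5 then {4} else {})"
  by (auto simp: less5 tree5_E_def)

lemma tdeg5: "tdeg 5 tree5_E v =
  (if v = 0 \<or> v = 1 then 3 else if v = 2 \<or> v = 3 \<or> v = 4 \<or> v = 5 then 1 else 0)"
  unfolding tdeg_def degset by auto

lemma leaf5: "is_leaf {0..5} 5 tree5_E v \<longleftrightarrow> v = 2 \<or> v = 3 \<or> v = 4 \<or> v = 5"
  unfolding is_leaf_def tdeg5 by auto

lemma is_tree5: "is_tree {0..5} 5 tree5_E"
  unfolding is_tree_def
proof (intro conjI)
  show "\<forall>i<5. tree5_E i \<subseteq> {0..5} \<and> card (tree5_E i) = 2"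
    by (auto simp: less5 tree5_E_def)
  show "inj_on tree5_E {..<5}"
    unfolding inj_on_def by (auto simp: less5 tree5_E_def doubleton_eq_iff)
  show "\<forall>u\<in>{0..5}. \<forall>v\<in>{0..5}. \<exists>ps. tpath 5 tree5_E ps \<and> hd ps = u \<and> last ps = v"
    using routes_ok by blast
qed simp_all

lemma biased5:
  assumes "0 \<le> b" "b \<le> 1/4"
  shows "is_biased_tree {0..5} 5 tree5_E (tree5_b b)"
  unfolding is_biased_tree_def
proof (intro conjI)
  show "\<forall>v\<in>{0..5}. \<not> is_leaf {0..5} 5 tree5_E v \<longrightarrow> tdeg 5 tree5_E v = 3"
    by (auto simp: leaf5 tdeg5)
  show "\<forall>i<5. 0 \<le> tree5_b b i" using assms by (auto simp: tree5_b_def)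
  show "(\<Sum>i<5. tree5_b b i) = 1" by (simp add: tree5_b_def numeral_eq_Suc)
qed (rule is_tree5)

lemma edge_in_path:
  assumes "i \<in> path_edges k E p"
  shows "E i \<subseteq> set p"
proof -
  from assms obtain j where "Suc j < length p" "E i = {p ! j, p ! Suc j}"
    unfolding path_edges_def by blast
  then show ?thesis by auto
qed

lemma three_edges:
  assumes dp: "distinct p"
    and i1: "i1 \<in> path_edges k E p" and i2: "i2 \<in> path_edges k E p" and i3: "i3 \<in> path_edges k E p"
    and v: "v \<in> E i1" "v \<in> E i2" "v \<in> E i3"
    and ne: "E i1 \<noteq> E i2" "E i1 \<noteq> E i3" "E i2 \<noteq> E i3"
  shows False
proof -
  have pos: "\<exists>j t. Suc j < length p \<and> E i = {p ! j, p ! Suc j} \<and> (t = j \<or> t = Suc j) \<and> p ! t = v"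
    if "i \<in> path_edges k E p" "v \<in> E i" for i
  proof -
    from that obtain j where j: "Suc j < length p" "E i = {p ! j, p ! Suc j}"
      unfolding path_edges_def by blast
    with that(2) have "p ! j = v \<or> p ! Suc j = v" by auto
    then show ?thesis using j by blast
  qed
  obtain j1 t1 where A1: "Suc j1 < length p" "E i1 = {p ! j1, p ! Suc j1}" "t1 = j1 \<or> t1 = Suc j1" "p ! t1 = v"
    using pos[OF i1 v(1)] by blast
  obtain j2 t2 where A2: "Suc j2 < length p" "E i2 = {p ! j2, p ! Suc j2}" "t2 = j2 \<or> t2 = Suc j2" "p ! t2 = v"
    using pos[OF i2 v(2)] by blast
  obtain j3 t3 where A3: "Suc j3 < length p" "E i3 = {p ! j3, p ! Suc j3}" "t3 = j3 \<or> t3 = Suc j3" "p ! t3 = v"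
    using pos[OF i3 v(3)] by blast
  have l1: "t1 < length p" using A1(1,3) by auto
  have l2: "t2 < length p" using A2(1,3) by auto
  have l3: "t3 < length p" using A3(1,3) by auto
  have t12: "t1 = t2" using nth_eq_iff_index_eq[OF dp l1 l2] A1(4) A2(4) by simp
  have t13: "t1 = t3" using nth_eq_iff_index_eq[OF dp l1 l3] A1(4) A3(4) by simp
  have "j1 = j2 \<or> j1 = j3 \<or> j2 = j3" using A1(3) A2(3) A3(3) t12 t13 by presburger
  then show False by (metis A1(2) A2(2) A3(2) ne)
qed

lemma lpu_bound:
  assumes "S \<in> leaf_path_unions {0..5} 5 tree5_E"
  shows "S \<subseteq> {0,1,2,3,4} \<and> (2 \<in> S \<longrightarrow> \<not> {0,1} \<subseteq> S \<and> \<not> {3,4} \<subseteq> S)"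
proof -
  from assms obtain Ps where lp: "\<forall>p\<in>Ps. leaf_path {0..5} 5 tree5_E p"
    and dj: "\<forall>p\<in>Ps. \<forall>q\<in>Ps. p \<noteq> q \<longrightarrow> set p \<inter> set q = {}"
    and S: "S = (\<Union>p\<in>Ps. path_edges 5 tree5_E p)"
    unfolding leaf_path_unions_def by blast
  have sub: "S \<subseteq> {0,1,2,3,4}" unfolding S path_edges_def by (auto simp: less5)
  have "\<not> {0,1} \<subseteq> S \<and> \<not> {3,4} \<subseteq> S" if "2 \<in> S"
  proof -
    from that obtain p where p: "p \<in> Ps" "2 \<in> path_edges 5 tree5_E p" unfolding S by blast
    have "tree5_E 2 \<subseteq> set p" by (rule edge_in_path[OF p(2)])
    then have p01: "0 \<in> set p" "1 \<in> set p" by (auto simp: tree5_E_def)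
    have "path_edges 5 tree5_E q = {}" if q: "q \<in> Ps" "q \<noteq> p" for q
    proof (rule ccontr)
      assume "path_edges 5 tree5_E q \<noteq> {}"
      then obtain i where i: "i \<in> path_edges 5 tree5_E q" by blast
      then have "i < 5" unfolding path_edges_def by blast
      then have "0 \<in> tree5_E i \<or> 1 \<in> tree5_E i" by (auto simp: less5 tree5_E_def)
      moreover have "tree5_E i \<subseteq> set q" by (rule edge_in_path[OF i])
      moreover have "set p \<inter> set q = {}" using dj p(1) q by blast
      ultimately show False using p01 by blast
    qed
    then have Sp: "S = path_edges 5 tree5_E p" unfolding S using p(1) by auto
    have dp: "distinct p" using lp p(1) unfolding leaf_path_def tpath_def by blast
    show ?thesis
    proof
      show "\<not> {0,1} \<subseteq> S"
      proof
        assume "{0,1} \<subseteq> S"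
        then show False using three_edges[OF dp, of 0 5 tree5_E 1 2 0] p(2) unfolding Sp
          by (auto simp: tree5_E_def doubleton_eq_iff)
      qed
      show "\<not> {3,4} \<subseteq> S"
      proof
        assume "{3,4} \<subseteq> S"
        then show False using three_edges[OF dp, of 3 5 tree5_E 4 2 1] p(2) unfolding Sp
          by (auto simp: tree5_E_def doubleton_eq_iff)
      qed
    qed
  qed
  with sub show ?thesis by blast
qed

lemma pe0: "path_edges 5 tree5_E [2,0,3] = {0,1}"
  by (auto simp: path_edges_Cons2 path_edges_single less5 tree5_E_def doubleton_eq_iff)
lemma lp0: "leaf_path {0..5} 5 tree5_E [2,0,3]"
  by (simp add: leaf_path_def tpath_Cons2 tpath_single ex_less5 tree5_E_def doubleton_eq_iff leaf5)

lemma pe1: "path_edges 5 tree5_E [4,1,5] = {3,4}"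
  by (auto simp: path_edges_Cons2 path_edges_single less5 tree5_E_def doubleton_eq_iff)
lemma lp1: "leaf_path {0..5} 5 tree5_E [4,1,5]"
  by (simp add: leaf_path_def tpath_Cons2 tpath_single ex_less5 tree5_E_def doubleton_eq_iff leaf5)

lemma pe2: "path_edges 5 tree5_E [2,0,1,4] = {0,2,3}"
  by (auto simp: path_edges_Cons2 path_edges_single less5 tree5_E_def doubleton_eq_iff)
lemma lp2: "leaf_path {0..5} 5 tree5_E [2,0,1,4]"
  by (simp add: leaf_path_def tpath_Cons2 tpath_single ex_less5 tree5_E_def doubleton_eq_iff leaf5)

lemma pe3: "path_edges 5 tree5_E [2,0,1,5] = {0,2,4}"
  by (auto simp: path_edges_Cons2 path_edges_single less5 tree5_E_def doubleton_eq_iff)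
lemma lp3: "leaf_path {0..5} 5 tree5_E [2,0,1,5]"
  by (simp add: leaf_path_def tpath_Cons2 tpath_single ex_less5 tree5_E_def doubleton_eq_iff leaf5)

lemma pe4: "path_edges 5 tree5_E [3,0,1,4] = {1,2,3}"
  by (auto simp: path_edges_Cons2 path_edges_single less5 tree5_E_def doubleton_eq_iff)
lemma lp4: "leaf_path {0..5} 5 tree5_E [3,0,1,4]"
  by (simp add: leaf_path_def tpath_Cons2 tpath_single ex_less5 tree5_E_def doubleton_eq_iff leaf5)

lemma pe5: "path_edges 5 tree5_E [3,0,1,5] = {1,2,4}"
  by (auto simp: path_edges_Cons2 path_edges_single less5 tree5_E_def doubleton_eq_iff)
lemma lp5: "leaf_path {0..5} 5 tree5_E [3,0,1,5]"
  by (simp add: leaf_path_def tpath_Cons2 tpath_single ex_less5 tree5_E_def doubleton_eq_iff leaf5)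

lemma single_lpu:
  assumes "leaf_path {0..5} 5 tree5_E p"
  shows "path_edges 5 tree5_E p \<in> leaf_path_unions {0..5} 5 tree5_E"
  unfolding leaf_path_unions_def using assms by (intro CollectI exI[of _ "{p}"]) auto

lemma A1_lpu: "{0,1,3,4} \<in> leaf_path_unions {0..5} 5 tree5_E"
  unfolding leaf_path_unions_def
proof (intro CollectI exI[of _ "{[2,0,3::nat],[4,1,5::nat]}"] conjI)
  show "\<forall>p\<in>{[2,0,3::nat],[4,1,5::nat]}. leaf_path {0..5} 5 tree5_E p" using lp0 lp1 by auto
  show "\<forall>p\<in>{[2,0,3::nat],[4,1,5::nat]}. \<forall>q\<in>{[2,0,3::nat],[4,1,5::nat]}. p \<noteq> q \<longrightarrow> set p \<inter> set q = {}" by auto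
  show "{0,1,3,4} = (\<Union>p\<in>{[2,0,3::nat],[4,1,5::nat]}. path_edges 5 tree5_E p)" using pe0 pe1 by auto
qed

definition Amax :: "nat set set" where
  "Amax = {{0,1,3,4}, {0,2,3}, {0,2,4}, {1,2,3}, {1,2,4}}"

lemma Amax_lpu: "Amax \<subseteq> leaf_path_unions {0..5} 5 tree5_E"
proof -
  have "{0,2,3} \<in> leaf_path_unions {0..5} 5 tree5_E" using single_lpu[OF lp2] by (simp only: pe2)
  moreover have "{0,2,4} \<in> leaf_path_unions {0..5} 5 tree5_E" using single_lpu[OF lp3] by (simp only: pe3)
  moreover have "{1,2,3} \<in> leaf_path_unions {0..5} 5 tree5_E" using single_lpu[OF lp4] by (simp only: pe4)
  moreover have "{1,2,4} \<in> leaf_path_unions {0..5} 5 tree5_E" using single_lpu[OF lp5] by (simp only: pe5)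
  ultimately show ?thesis using A1_lpu unfolding Amax_def by (simp only: insert_subset empty_subsetI)
qed

lemma lpu_in_Amax:
  assumes "S \<in> leaf_path_unions {0..5} 5 tree5_E"
  shows "\<exists>A\<in>Amax. S \<subseteq> A"
proof -
  have H: "S \<subseteq> {0,1,2,3,4}" "2 \<in> S \<longrightarrow> \<not> {0,1} \<subseteq> S \<and> \<not> {3,4} \<subseteq> S"
    using lpu_bound[OF assms] by auto
  show ?thesis
  proof (cases "2 \<in> S")
    case False
    then have "S \<subseteq> {0,1,3,4}" using H(1) by auto
    then show ?thesis unfolding Amax_def by blast
  next
    case True
    then have "0 \<notin> S \<or> 1 \<notin> S" "3 \<notin> S \<or> 4 \<notin> S" using H by auto
    then consider "0 \<notin> S" "3 \<notin> S" | "0 \<notin> S" "4 \<notin> S" | "1 \<notin> S" "3 \<notin> S" | "1 \<notin> S" "4 \<notin> S"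
      by blast
    then show ?thesis
    proof cases
      case 1
      have "S \<subseteq> {1,2,4}" using H(1) 1 by auto
      moreover have "{1,2,4} \<in> Amax" unfolding Amax_def by simp
      ultimately show ?thesis by blast
    next
      case 2
      have "S \<subseteq> {1,2,3}" using H(1) 2 by auto
      moreover have "{1,2,3} \<in> Amax" unfolding Amax_def by simp
      ultimately show ?thesis by blast
    next
      case 3
      have "S \<subseteq> {0,2,4}" using H(1) 3 by auto
      moreover have "{0,2,4} \<in> Amax" unfolding Amax_def by simp
      ultimately show ?thesis by blast
    next
      case 4
      have "S \<subseteq> {0,2,3}" using H(1) 4 by auto
      moreover have "{0,2,3} \<in> Amax" unfolding Amax_def by simp
      ultimately show ?thesis by blast
    qed
  qed
qed

lemma maximal5: "maximal_unions {0..5} 5 tree5_E = Amax"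
proof (intro set_eqI iffI)
  fix S assume S: "S \<in> maximal_unions {0..5} 5 tree5_E"
  then have Sl: "S \<in> leaf_path_unions {0..5} 5 tree5_E" and nm: "\<not> (\<exists>S'\<in>leaf_path_unions {0..5} 5 tree5_E. S \<subset> S')"
    unfolding maximal_unions_def by auto
  obtain A where A: "A \<in> Amax" "S \<subseteq> A" using lpu_in_Amax[OF Sl] by blast
  have "A \<in> leaf_path_unions {0..5} 5 tree5_E" using A(1) Amax_lpu by blast
  then have "S = A" using nm A(2) by blast
  then show "S \<in> Amax" using A(1) by simp
next
  fix S assume S: "S \<in> Amax"
  have "S \<in> leaf_path_unions {0..5} 5 tree5_E" using S Amax_lpu by blast
  moreover have "\<not> (\<exists>S'\<in>leaf_path_unions {0..5} 5 tree5_E. S \<subset> S')"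
  proof
    assume "\<exists>S'\<in>leaf_path_unions {0..5} 5 tree5_E. S \<subset> S'"
    then obtain S' where S': "S' \<in> leaf_path_unions {0..5} 5 tree5_E" "S \<subset> S'" by blast
    obtain A where A: "A \<in> Amax" "S' \<subseteq> A" using lpu_in_Amax[OF S'(1)] by blast
    have "S \<subset> A" using S'(2) A(2) by blast
    have "S = {0,1,3,4} \<or> S = {0,2,3} \<or> S = {0,2,4} \<or> S = {1,2,3} \<or> S = {1,2,4}"
      using S unfolding Amax_def by (simp only: insert_iff empty_iff simp_thms)
    moreover have "A = {0,1,3,4} \<or> A = {0,2,3} \<or> A = {0,2,4} \<or> A = {1,2,3} \<or> A = {1,2,4}"
      using A(1) unfolding Amax_def by (simp only: insert_iff empty_iff simp_thms)
    ultimately show False using \<open>S \<subset> A\<close> by (elim disjE) (simp_all add: psubset_eq)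
  qed
  ultimately show "S \<in> maximal_unions {0..5} 5 tree5_E" unfolding maximal_unions_def by blast
qed

lemma max5_formula:
  fixes be c x0 x1 x2 x3 x4 :: real
  assumes be: "0 \<le> be"
  shows "max (be*x0 + be*x1 + be*x3 + be*x4) (max (be*x0 + c*x2 + be*x3) (max (be*x0 + c*x2 + be*x4)
           (max (be*x1 + c*x2 + be*x3) (be*x1 + c*x2 + be*x4))))
       = be*(max x0 x1 + max x3 x4) + max (be*(min x0 x1 + min x3 x4)) (c * x2)"
proof -
  have m1: "be*x0 \<le> be*x1" if "x0 \<le> x1" using mult_left_mono[OF that be] .
  have m2: "be*x1 \<le> be*x0" if "x1 \<le> x0" using mult_left_mono[OF that be] .
  have m3: "be*x3 \<le> be*x4" if "x3 \<le> x4" using mult_left_mono[OF that be] .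
  have m4: "be*x4 \<le> be*x3" if "x4 \<le> x3" using mult_left_mono[OF that be] .
  show ?thesis
  proof (cases "x0 \<le> x1"; cases "x3 \<le> x4")
    assume a: "x0 \<le> x1" "x3 \<le> x4"
    show ?thesis using m1[OF a(1)] m3[OF a(2)] a by (simp add: max_def min_def algebra_simps)
  next
    assume a: "x0 \<le> x1" "\<not> x3 \<le> x4"
    show ?thesis using m1[OF a(1)] m4 a by (simp add: max_def min_def algebra_simps)
  next
    assume a: "\<not> x0 \<le> x1" "x3 \<le> x4"
    show ?thesis using m2 m3[OF a(2)] a by (simp add: max_def min_def algebra_simps)
  next
    assume a: "\<not> x0 \<le> x1" "\<not> x3 \<le> x4"
    show ?thesis using m2 m4 a by (simp add: max_def min_def algebra_simps)
  qed
qed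

lemma fT5:
  fixes be :: real assumes be: "0 \<le> be"
  shows "fT {0..5} 5 tree5_E (tree5_b be) x =
    be*(max (x 0) (x 1) + max (x 3) (x 4)) + max (be*(min (x 0) (x 1) + min (x 3) (x 4))) ((1-4*be) * x 2)"
proof -
  have "fT {0..5} 5 tree5_E (tree5_b be) x =
     max (be*x 0 + be*x 1 + be*x 3 + be*x 4) (max (be*x 0 + (1-4*be)*x 2 + be*x 3) (max (be*x 0 + (1-4*be)*x 2 + be*x 4)
           (max (be*x 1 + (1-4*be)*x 2 + be*x 3) (be*x 1 + (1-4*be)*x 2 + be*x 4))))"
    unfolding fT_def maximal5 Amax_def by (simp add: tree5_b_def add.assoc)
  also have "\<dots> = be*(max (x 0) (x 1) + max (x 3) (x 4)) + max (be*(min (x 0) (x 1) + min (x 3) (x 4))) ((1-4*be) * x 2)"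
    by (rule max5_formula[OF be])
  finally show ?thesis .
qed


lemma pw_bounds:
  fixes t U :: real assumes t: "0 \<le> t" "t \<le> U"
  shows "0 \<le> t^2" "t^2 \<le> U*t" "0 \<le> t^3" "t^3 \<le> U*U*t"
proof -
  have U: "0 \<le> U" using t by simp
  show "0 \<le> t^2" by simp
  show t2: "t^2 \<le> U*t" unfolding power2_eq_square using mult_right_mono[OF t(2) t(1)] .
  show "0 \<le> t^3" using t by simp
  have "t^3 = t^2 * t" by (simp add: power3_eq_cube power2_eq_square)
  also have "\<dots> \<le> (U*t) * t" using mult_right_mono[OF t2 t(1)] .
  also have "\<dots> = U * t^2" by (simp add: power2_eq_square)
  also have "\<dots> \<le> U * (U*t)" using mult_left_mono[OF t2 U] .
  finally show "t^3 \<le> U*U*t" by simp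
qed

lemma L1: "(0::real) < b \<Longrightarrow> b \<le> 0.172 \<Longrightarrow> 105 * b^3 - 90 * b^2 + 24 * b - 2 < 0"
proof -
  assume a: "(0::real) < b" "b \<le> 0.172"
  define t where "t = 43/250 - b"
  have bt: "b = 43/250 - t" unfolding t_def by simp
  have e: "105 * b^3 - 90 * b^2 + 24 * b - 2 = (-853/3125000) + (-29487/12500)*t + (-1791/50)*t^2 + (-105)*t^3"
    unfolding bt by (simp add: power2_eq_square power3_eq_cube field_simps)
  have "0 \<le> t" using a unfolding t_def by simp
  then have "0 \<le> t^2" "0 \<le> t^3" by simp_all
  then show ?thesis unfolding e using \<open>0 \<le> t\<close> by linarith
qed

lemma L2: "(0.1722::real) \<le> b \<Longrightarrow> b < 1/4 \<Longrightarrow> 105 * b^3 - 90 * b^2 + 24 * b - 2 > 0"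
proof -
  assume a: "(0.1722::real) \<le> b" "b < 1/4"
  show ?thesis
  proof (cases "b \<le> 0.2")
    case True
    define t where "t = b - 861/5000"
    have bt: "b = 861/5000 + t" unfolding t_def by simp
    have e: "105 * b^3 - 90 * b^2 + 24 * b - 2 = (4935001/25000000000) + (11723223/5000000)*t + (-35757/1000)*t^2 + 105*t^3"
      unfolding bt by (simp add: power2_eq_square power3_eq_cube field_simps)
    have t: "0 \<le> t" "t \<le> 139/5000" using a True unfolding t_def by simp_all
    note pw = pw_bounds[OF t]
    show ?thesis unfolding e using t pw by linarith
  next
    case False
    define t where "t = 1/4 - b"
    have bt: "b = 1/4 - t" unfolding t_def by simp
    have e: "105 * b^3 - 90 * b^2 + 24 * b - 2 = (1/64) + (21/16)*t + (-45/4)*t^2 + (-105)*t^3"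
      unfolding bt by (simp add: power2_eq_square power3_eq_cube field_simps)
    have t: "0 \<le> t" "t \<le> 1/20" using a False unfolding t_def by simp_all
    note pw = pw_bounds[OF t]
    show ?thesis unfolding e using t pw by linarith
  qed
qed

lemma L3: "(0.172::real) < b \<Longrightarrow> b < 0.1722 \<Longrightarrow> 0.8797 * (7*b-2)^2 < 4 * (1 - 3*b) * (5 * b^2 - 5*b + 1)"
proof -
  assume a: "(0.172::real) < b" "b < 0.1722"
  define t where "t = b - 43/250"
  have bt: "b = 43/250 + t" unfolding t_def by simp
  have e: "4 * (1 - 3*b) * (5 * b^2 - 5*b + 1) - 0.8797 * (7*b-2)^2 = (13203/625000000) + (-2179/1250000)*t + (59347/10000)*t^2 + (-60)*t^3"
    unfolding bt by (simp add: power2_eq_square power3_eq_cube field_simps)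
  have t: "0 \<le> t" "t \<le> 1/5000" using a unfolding t_def by simp_all
  note pw = pw_bounds[OF t]
  have "0 < 4 * (1 - 3*b) * (5 * b^2 - 5*b + 1) - 0.8797 * (7*b-2)^2" unfolding e using t pw by linarith
  then show ?thesis by simp
qed

lemma L4: "(0.172::real) < b \<Longrightarrow> b < 0.1722 \<Longrightarrow> 4 * (1 - 3*b) * (5 * b^2 - 5*b + 1) < 0.8798 * (7*b-2)^2"
proof -
  assume a: "(0.172::real) < b" "b < 0.1722"
  define t where "t = b - 43/250"
  have bt: "b = 43/250 + t" unfolding t_def by simp
  have e: "0.8798 * (7*b-2)^2 - 4 * (1 - 3*b) * (5 * b^2 - 5*b + 1) = (13199/312500000) + (393/625000)*t + (-29649/5000)*t^2 + 60*t^3"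
    unfolding bt by (simp add: power2_eq_square power3_eq_cube field_simps)
  have t: "0 \<le> t" "t \<le> 1/5000" using a unfolding t_def by simp_all
  note pw = pw_bounds[OF t]
  have "0 < 0.8798 * (7*b-2)^2 - 4 * (1 - 3*b) * (5 * b^2 - 5*b + 1)" unfolding e using t pw by linarith
  then show ?thesis by simp
qed

lemma value_eq:
  fixes b :: real assumes "0 < b" "b < 1/4"
  shows "3*b + b + (1-4*b) * (2/(2+b/(1-4*b))) * (2/(2+b/(1-4*b))) =
     4 * (1 - 3*b) * (5 * b^2 - 5*b + 1) / (7*b - 2)^2"
proof -
  have k: "1 - 4*b \<noteq> 0" and s: "2 - 7*b \<noteq> 0" using assms by auto
  have r: "2/(2+b/(1-4*b)) = 2*(1-4*b)/(2-7*b)"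
    using k s by (simp add: field_simps)
  have sq: "(7*b - 2)^2 = (2 - 7*b)^2" by (simp add: power2_eq_square algebra_simps)
  have s2: "(2 - 7*b)^2 \<noteq> 0" using s by simp
  have m: "(1-4*b) * (2*(1-4*b)/(2-7*b)) * (2*(1-4*b)/(2-7*b)) = 4*(1-4*b)^3/(2-7*b)^2"
    by (simp add: power2_eq_square power3_eq_cube) (rule disjI2, rule disjI2, algebra)
  have "3*b + b + 4*(1-4*b)^3/(2-7*b)^2 = ((3*b+b)*(2-7*b)^2 + 4*(1-4*b)^3)/(2-7*b)^2"
    using add_divide_eq_iff[OF s2] by simp
  also have "(3*b+b)*(2-7*b)^2 + 4*(1-4*b)^3 = 4 * (1 - 3*b) * (5 * b^2 - 5*b + 1)"
    by (simp add: power2_eq_square power3_eq_cube algebra_simps)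
  finally show ?thesis unfolding r m sq .
qed

theorem mainTheorem8:
  fixes b :: real
  assumes "0 < b" "b < 1/4" "105 * b^3 - 90 * b^2 + 24 * b - 2 = 0"
  shows "is_biased_tree {0..5} 5 tree5_E (tree5_b b)
       \<and> ET {0..5} 5 tree5_E (tree5_b b) =
           ennreal (4 * (1 - 3*b) * (5 * b^2 - 5*b + 1) / (7*b - 2)^2)
       \<and> 0.8797 < 4 * (1 - 3*b) * (5 * b^2 - 5*b + 1) / (7*b - 2)^2
       \<and> 4 * (1 - 3*b) * (5 * b^2 - 5*b + 1) / (7*b - 2)^2 < 0.8798
       \<and> admissible 5 0.8798"
proof -
  have b0: "0 \<le> b" using assms by simp
  have k: "0 < 1 - 4*b" using assms by simp
  have T: "is_biased_tree {0..5} 5 tree5_E (tree5_b b)" using assms by (intro biased5) auto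
  have E: "ET {0..5} 5 tree5_E (tree5_b b) = ennreal (4 * (1 - 3*b) * (5 * b^2 - 5*b + 1) / (7*b - 2)^2)"
    unfolding ET_def fT5[OF b0] integral_main[OF b0 k] value_eq[OF assms(1,2)] ..
  have bl: "0.172 < b"
  proof (rule ccontr)
    assume "\<not> 0.172 < b"
    then have "105 * b^3 - 90 * b^2 + 24 * b - 2 < 0" using L1 assms(1) by simp
    then show False using assms(3) by simp
  qed
  have bu: "b < 0.1722"
  proof (rule ccontr)
    assume "\<not> b < 0.1722"
    then have "105 * b^3 - 90 * b^2 + 24 * b - 2 > 0" using L2 assms(2) by simp
    then show False using assms(3) by simp
  qed
  have pos: "0 < (7*b - 2)^2" using assms by simp
  have lo: "0.8797 < 4 * (1 - 3*b) * (5 * b^2 - 5*b + 1) / (7*b - 2)^2"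
    unfolding pos_less_divide_eq[OF pos] by (rule L3[OF bl bu])
  have hi: "4 * (1 - 3*b) * (5 * b^2 - 5*b + 1) / (7*b - 2)^2 < 0.8798"
    unfolding pos_divide_less_eq[OF pos] by (rule L4[OF bl bu])
  have A: "admissible 5 0.8798"
    unfolding admissible_def
  proof (intro conjI exI)
    show "(0::real) < 0.8798" by simp
    show "is_biased_tree {0..5} 5 tree5_E (tree5_b b)" by (rule T)
    show "ET {0..5} 5 tree5_E (tree5_b b) < ennreal 0.8798"
      unfolding E by (rule ennreal_lessI) (simp, rule hi)
  qed
  show ?thesis using T E lo hi A by blast
qed

end
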